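(* Let $n\ge 2$ and let $\mathbf d_n=(d_1,d_2,\ldots,d_n)$ be a nonincreasing sequence of nonnegative integers. Then $\mathbf d_n$ is the degree sequence of some Toeplitz graph on $n$ vertices if and only if there is a permutation $\pi$ of $[n]$ such that, writing $m=\lfloor (n-1)/2\rfloor$ and letting $s$ be the number of indices $i\in\{1,\ldots,m\}$ with $d_{\pi(i+1)}\ne d_{\pi(i)}$: (a) $|d_{\pi(i+1)}-d_{\pi(i)}|\le 1$ for every $i\in[n-1]$; (b) $d_{\pi(i)}=d_{\pi(n-i+1)}$ for every $i\in[n]$; (c) $s\le d_{\pi(1)}\le n-1-s$; (d) if $n$ is odd, then $d_{\pi(1)}$ and $s$ have the same parity.
   Context: A Toeplitz graph on $n$ vertices is a simple graph whose adjacency matrix is a symmetric $(0,1)$ Toeplitz matrix with zero diagonal; equivalently, for some $k\ge 0$ and integers $1\le t_1<\cdots<t_k\le n-1$, it is the graph $G_n\langle t_1,\ldots,t_k\rangle$ on vertex set $[n]$ in which distinct $i,j$ are adjacent iff $|i-j|\in\{t_1,\ldots,t_k\}$ (with $k=0$ giving the edgeless graph). The degree sequence of a graph is the nonincreasing sequence of its vertex degrees. *)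

theory Defs
  imports Main "HOL-Combinatorics.Permutations"
begin

definition toeplitz_adj :: "nat \<Rightarrow> nat set \<Rightarrow> nat \<Rightarrow> nat \<Rightarrow> bool" where
  "toeplitz_adj n T i j \<longleftrightarrow>
     i \<in> {1..n} \<and> j \<in> {1..n} \<and> i \<noteq> j \<and> nat \<bar>int i - int j\<bar> \<in> T"

definition toeplitz_degree :: "nat \<Rightarrow> nat set \<Rightarrow> nat \<Rightarrow> nat" where
  "toeplitz_degree n T i = card {j \<in> {1..n}. toeplitz_adj n T i j}"

definition toeplitz_degree_sequence :: "nat \<Rightarrow> nat set \<Rightarrow> nat list" where
  "toeplitz_degree_sequence n T = rev (sort (map (toeplitz_degree n T) [1..<n+1]))"

definition is_toeplitz_degree_sequence :: "nat \<Rightarrow> nat list \<Rightarrow> bool" where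
  "is_toeplitz_degree_sequence n d \<longleftrightarrow>
     (\<exists>T. T \<subseteq> {1..n-1} \<and> d = toeplitz_degree_sequence n T)"

end

theory Submission
  imports Defs
begin

lemma deg_formula:
  assumes T: "T \<subseteq> {1..n-1}" and i: "i \<in> {1..n}"
  shows "toeplitz_degree n T i = card {t\<in>T. t<i} + card {t\<in>T. i+t \<le> n}"
proof -
  have finT: "finite T" using T finite_subset by blast
  have pos: "\<And>t. t \<in> T \<Longrightarrow> t \<ge> 1" using T by auto
  have eq: "{j \<in> {1..n}. toeplitz_adj n T i j} = (\<lambda>t. i-t) ` {t\<in>T. t<i} \<union> (\<lambda>t. i+t) ` {t\<in>T. i+t \<le> n}"
  proof (rule set_eqI, rule iffI)
    fix j assume "j \<in> {j \<in> {1..n}. toeplitz_adj n T i j}"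
    hence j: "j \<in> {1..n}" "j \<noteq> i" "nat \<bar>int i - int j\<bar> \<in> T" by (auto simp: toeplitz_adj_def)
    show "j \<in> (\<lambda>t. i-t) ` {t\<in>T. t<i} \<union> (\<lambda>t. i+t) ` {t\<in>T. i+t \<le> n}"
    proof (cases "j < i")
      case True
      hence "nat \<bar>int i - int j\<bar> = i - j" by auto
      with j True have "i - j \<in> {t\<in>T. t<i}" "j = i - (i - j)" by auto
      thus ?thesis by blast
    next
      case False
      hence "nat \<bar>int i - int j\<bar> = j - i" by auto
      with j False have "j - i \<in> {t\<in>T. i+t\<le>n}" "j = i + (j - i)" by auto
      thus ?thesis by blast
    qed
  next
    fix j assume "j \<in> (\<lambda>t. i-t) ` {t\<in>T. t<i} \<union> (\<lambda>t. i+t) ` {t\<in>T. i+t \<le> n}"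
    then show "j \<in> {j \<in> {1..n}. toeplitz_adj n T i j}"
    proof
      assume "j \<in> (\<lambda>t. i-t) ` {t\<in>T. t<i}"
      then obtain t where t: "t \<in> T" "t < i" "j = i - t" by auto
      have "t \<ge> 1" using t T by auto
      moreover have "nat \<bar>int i - int j\<bar> = t" using t by auto
      ultimately show ?thesis using t i by (auto simp: toeplitz_adj_def)
    next
      assume "j \<in> (\<lambda>t. i+t) ` {t\<in>T. i+t \<le> n}"
      then obtain t where t: "t \<in> T" "i+t \<le> n" "j = i + t" by auto
      have "t \<ge> 1" using t T by auto
      moreover have "nat \<bar>int i - int j\<bar> = t" using t by auto
      ultimately show ?thesis using t i by (auto simp: toeplitz_adj_def)
    qed
  qed
  have "card ((\<lambda>t. i-t) ` {t\<in>T. t<i} \<union> (\<lambda>t. i+t) ` {t\<in>T. i+t \<le> n})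
      = card ((\<lambda>t. i-t) ` {t\<in>T. t<i}) + card ((\<lambda>t. i+t) ` {t\<in>T. i+t \<le> n})"
  proof (rule card_Un_disjoint)
    show "(\<lambda>t. i-t) ` {t\<in>T. t<i} \<inter> (\<lambda>t. i+t) ` {t\<in>T. i+t \<le> n} = {}"
    proof (rule ccontr)
      assume "(\<lambda>t. i-t) ` {t\<in>T. t<i} \<inter> (\<lambda>t. i+t) ` {t\<in>T. i+t \<le> n} \<noteq> {}"
      then obtain t u where "t \<in> T" "u \<in> T" "i - t = i + u" by blast
      with pos[of u] show False by linarith
    qed
  qed (use finT in auto)
  also have "card ((\<lambda>t. i-t) ` {t\<in>T. t<i}) = card {t\<in>T. t<i}"
    by (rule card_image) (auto simp: inj_on_def)
  also have "card ((\<lambda>t. i+t) ` {t\<in>T. i+t \<le> n}) = card {t\<in>T. i+t \<le> n}"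
    by (rule card_image) (auto simp: inj_on_def)
  finally show ?thesis unfolding toeplitz_degree_def eq .
qed

lemma card_step:
  assumes "finite T"
  shows "card {t\<in>T. P t \<or> t = a} = card {t\<in>T. P t} + (if a \<in> T \<and> \<not> P a then 1 else 0)"
proof (cases "a \<in> T \<and> \<not> P a")
  case True
  hence "{t\<in>T. P t \<or> t = a} = insert a {t\<in>T. P t}" by auto
  thus ?thesis using True assms by simp
next
  case False
  hence "{t\<in>T. P t \<or> t = a} = {t\<in>T. P t}" by auto
  thus ?thesis using False by simp
qed

lemma deg_step:
  assumes T: "T \<subseteq> {1..n-1}" and i: "1 \<le> i" "i < n"
  shows "int (toeplitz_degree n T (Suc i)) = int (toeplitz_degree n T i)
           + (if i \<in> T then 1 else 0) - (if n - i \<in> T then 1 else 0)"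
proof -
  have finT: "finite T" using T finite_subset by blast
  have a: "{t\<in>T. t < Suc i} = {t\<in>T. t < i \<or> t = i}" by auto
  have b: "{t\<in>T. i + t \<le> n} = {t\<in>T. Suc i + t \<le> n \<or> t = n - i}" using i by auto
  show ?thesis
    using deg_formula[OF T, of i] deg_formula[OF T, of "Suc i"] i
    unfolding a b card_step[OF finT] by auto
qed

lemma deg_one:
  assumes T: "T \<subseteq> {1..n-1}" and "n \<ge> 1"
  shows "toeplitz_degree n T 1 = card T"
proof -
  have "\<forall>t\<in>T. 1 \<le> t \<and> t \<le> n-1" using T by auto
  hence "{t\<in>T. t < 1} = {}" "{t\<in>T. 1 + t \<le> n} = T" using assms by auto
  thus ?thesis using deg_formula[OF T, of 1] assms by simp
qed

lemma deg_sym: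
  assumes T: "T \<subseteq> {1..n-1}" and i: "i \<in> {1..n}"
  shows "toeplitz_degree n T (n - i + 1) = toeplitz_degree n T i"
proof -
  have "{t\<in>T. t < n - i + 1} = {t\<in>T. i + t \<le> n}" "{t\<in>T. n - i + 1 + t \<le> n} = {t\<in>T. t < i}"
    using i by auto
  moreover have "n - i + 1 \<in> {1..n}" using i by auto
  ultimately show ?thesis using deg_formula[OF T i] deg_formula[OF T, of "n-i+1"] by simp
qed

lemma count_T:
  assumes T: "T \<subseteq> {1..n-1}" and m: "m = (n - 1) div 2" and n1: "n \<ge> 1"
  defines "S \<equiv> {i\<in>{1..m}. (i\<in>T) \<noteq> (n-i\<in>T)}"
  shows "card S \<le> card T \<and> card T + card S \<le> n - 1 \<and> (odd n \<longrightarrow> even (card T + card S))"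
proof -
  define L where "L = T \<inter> {1..m}"
  define R where "R = {i\<in>{1..m}. n-i\<in>T}"
  define M where "M = T \<inter> {m<..<n-m}"
  have finT: "finite T" using T finite_subset by blast
  have Tdec: "T = L \<union> (\<lambda>i. n-i) ` R \<union> M"
  proof (rule set_eqI, rule iffI)
    fix t assume t: "t \<in> T"
    hence t1: "1 \<le> t" "t \<le> n-1" using T by auto
    show "t \<in> L \<union> (\<lambda>i. n-i) ` R \<union> M"
    proof (cases "t \<le> m")
      case True thus ?thesis using t t1 by (auto simp: L_def)
    next
      case False
      show ?thesis
      proof (cases "t < n - m")
        case True thus ?thesis using False t by (auto simp: M_def)
      next
        case False2: False
        have "n - t \<in> R" using t t1 False2 m unfolding R_def by auto
        moreover have "t = n - (n - t)" using t1 by auto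
        ultimately show ?thesis by blast
      qed
    qed
  next
    fix t assume "t \<in> L \<union> (\<lambda>i. n-i) ` R \<union> M"
    thus "t \<in> T" unfolding L_def R_def M_def by auto
  qed
  have finR: "finite R" "finite L" "finite M" unfolding R_def L_def M_def by auto
  have mn: "m < n - m" using m n1 by presburger
  have "card T = card (L \<union> (\<lambda>i. n-i) ` R) + card M"
    unfolding Tdec
    apply (rule card_Un_disjoint) using finR mn by (auto simp: L_def R_def M_def)
  also have "card (L \<union> (\<lambda>i. n-i) ` R) = card L + card ((\<lambda>i. n-i) ` R)"
    apply (rule card_Un_disjoint) using finR mn by (auto simp: L_def R_def)
  also have "card ((\<lambda>i. n-i) ` R) = card R"
    apply (rule card_image) using m by (auto simp: R_def inj_on_def)
  finally have cT: "card T = card L + card R + card M" .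
  have SLR: "S = (L - R) \<union> (R - L)" unfolding S_def L_def R_def by auto
  have LR: "L \<union> R = S \<union> (L \<inter> R)" "S \<inter> (L \<inter> R) = {}" unfolding SLR by auto
  have c1: "card L + card R = card (L \<union> R) + card (L \<inter> R)"
    using card_Un_Int finR by blast
  have c2: "card (L \<union> R) = card S + card (L \<inter> R)"
    unfolding LR(1) apply (rule card_Un_disjoint) using finR LR(2) by (auto simp: S_def)
  have c3: "card (L \<union> R) \<le> m"
  proof -
    have "L \<union> R \<subseteq> {1..m}" unfolding L_def R_def by auto
    hence "card (L \<union> R) \<le> card {1..m}" by (rule card_mono[rotated]) auto
    thus ?thesis by simp
  qed
  have c4: "card M \<le> n - 1 - 2*m"
  proof -
    have "card M \<le> card {m<..<n-m}" unfolding M_def by (rule card_mono) auto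
    thus ?thesis by (simp add: mult_2)
  qed
  show ?thesis using cT c1 c2 c3 c4 m by auto
qed

lemma construct:
  fixes D :: "nat \<Rightarrow> nat"
  assumes n2: "n \<ge> 2" and m: "m = (n - 1) div 2"
    and a: "\<forall>i\<in>{1..n-1}. \<bar>int (D (i+1)) - int (D i)\<bar> \<le> 1"
    and b: "\<forall>i\<in>{1..n}. D i = D (n - i + 1)"
    and s: "s = card {i\<in>{1..m}. D (i+1) \<noteq> D i}"
    and c: "s \<le> D 1" "D 1 \<le> n - 1 - s"
    and d: "odd n \<longrightarrow> (even (D 1) \<longleftrightarrow> even s)"
  shows "\<exists>T. T \<subseteq> {1..n-1} \<and> (\<forall>i\<in>{1..n}. toeplitz_degree n T i = D i)"
proof -
  define Inc where "Inc = {i\<in>{1..m}. D i < D (i+1)}"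
  define Dec where "Dec = {i\<in>{1..m}. D (i+1) < D i}"
  define Eq where "Eq = {i\<in>{1..m}. D (i+1) = D i}"
  have fin: "finite Inc" "finite Dec" "finite Eq" unfolding Inc_def Dec_def Eq_def by auto
  have dis1: "Inc \<inter> Dec = {}" "Eq \<inter> (Inc \<union> Dec) = {}" unfolding Inc_def Dec_def Eq_def by auto
  have sID: "s = card Inc + card Dec"
  proof -
    have "{i\<in>{1..m}. D (i+1) \<noteq> D i} = Inc \<union> Dec" unfolding Inc_def Dec_def by auto
    thus ?thesis using s fin dis1 by (simp add: card_Un_disjoint)
  qed
  have cEq: "card Eq = m - s"
  proof -
    have "{1..m} = Eq \<union> (Inc \<union> Dec)" unfolding Inc_def Dec_def Eq_def by auto
    hence "card {1..m} = card Eq + card (Inc \<union> Dec)"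
      using fin dis1 by (simp add: card_Un_disjoint)
    thus ?thesis using sID fin dis1 by (simp add: card_Un_disjoint)
  qed
  define k where "k = (D 1 - s) div 2"
  define r where "r = (D 1 - s) mod 2"
  have mn: "m < n - m" "2*m \<le> n - 1" "n - 1 \<le> 2*m+1"
  proof -
    have "n - 1 = 2*m + (n-1) mod 2" using m by simp
    moreover have "(n-1) mod 2 < 2" by simp
    ultimately show "m < n - m" "2*m \<le> n - 1" "n - 1 \<le> 2*m+1" using n2 by linarith+
  qed
  have kle: "k \<le> m - s"
  proof -
    have "2*k \<le> D 1 - s" unfolding k_def by simp
    thus ?thesis using c mn by linarith
  qed
  have rodd: "r = 1 \<Longrightarrow> even n"
  proof (rule ccontr)
    assume "r = 1" "odd n" hence "even (D 1) \<longleftrightarrow> even s" using d by auto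
    hence "even (D 1 - s)" using c by auto
    thus False using \<open>r = 1\<close> unfolding r_def by simp
  qed
  have D1: "D 1 = s + 2*k + r"
  proof - have "D 1 - s = 2*k + r" unfolding k_def r_def by simp
    thus ?thesis using c by linarith qed
  obtain K where K: "K \<subseteq> Eq" "card K = k"
    using obtain_subset_with_card_n[of k Eq] kle cEq by auto
  have finK: "finite K" using K fin finite_subset by blast
  define Mid where "Mid = (if r = 1 then {n div 2} else {})"
  define L where "L = Inc \<union> K"
  define R where "R = Dec \<union> K"
  define T where "T = L \<union> (\<lambda>i. n-i) ` R \<union> Mid"
  have Lm: "L \<subseteq> {1..m}" "R \<subseteq> {1..m}" using K unfolding L_def R_def Inc_def Dec_def Eq_def by auto
  have Mid_r: "r = 1 \<Longrightarrow> n div 2 = m + 1"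
  proof -
    assume "r = 1" hence "even n" by (rule rodd)
    then obtain q where "n = 2*q" by auto
    thus "n div 2 = m + 1" using m n2 by (cases q) auto
  qed
  have TT: "T \<subseteq> {1..n-1}"
  proof -
    have "L \<subseteq> {1..n-1}" using Lm mn by auto
    moreover have "(\<lambda>i. n-i) ` R \<subseteq> {1..n-1}"
    proof
      fix x assume "x \<in> (\<lambda>i. n-i) ` R"
      then obtain i where i: "i \<in> R" "x = n - i" by auto
      with Lm have "1 \<le> i" "i \<le> m" by auto
      thus "x \<in> {1..n-1}" using mn i by auto
    qed
    moreover have "Mid \<subseteq> {1..n-1}" using Mid_r mn unfolding Mid_def by auto
    ultimately show ?thesis unfolding T_def by blast
  qed
  have memL: "i \<in> {1..m} \<Longrightarrow> (i \<in> T \<longleftrightarrow> i \<in> L)" for i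
  proof -
    assume i: "i \<in> {1..m}"
    have "i \<notin> (\<lambda>i. n-i) ` R"
    proof
      assume "i \<in> (\<lambda>i. n-i) ` R"
      then obtain x where x: "x \<in> R" "i = n - x" by auto
      hence "x \<le> m" using Lm by auto
      thus False using x i mn by auto
    qed
    moreover have "i \<notin> Mid" using i Mid_r unfolding Mid_def by auto
    ultimately show ?thesis unfolding T_def by blast
  qed
  have memR: "i \<in> {1..m} \<Longrightarrow> (n - i \<in> T \<longleftrightarrow> i \<in> R)" for i
  proof -
    assume i: "i \<in> {1..m}"
    have "n - i \<notin> L"
    proof
      assume "n - i \<in> L" hence "n - i \<le> m" using Lm by auto
      thus False using i mn by auto
    qed
    moreover have "n - i \<notin> Mid" using i Mid_r mn unfolding Mid_def by auto
    moreover have "n - i \<in> (\<lambda>i. n-i) ` R \<longleftrightarrow> i \<in> R"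
    proof
      assume "n - i \<in> (\<lambda>i. n-i) ` R"
      then obtain j where "j \<in> R" "n - i = n - j" by auto
      moreover have "j \<le> m" using \<open>j \<in> R\<close> Lm by auto
      moreover have "i = j" using \<open>n - i = n - j\<close> i \<open>j \<le> m\<close> mn by auto
      ultimately show "i \<in> R" by simp
    qed auto
    ultimately show "n - i \<in> T \<longleftrightarrow> i \<in> R" unfolding T_def by blast
  qed
  have incr: "int (D (Suc i)) - int (D i) = (if i \<in> T then 1 else 0) - (if n - i \<in> T then 1 else 0)"
    if i: "1 \<le> i" "i < n" for i
  proof -
    have low: "int (D (Suc j)) - int (D j) = (if j \<in> T then 1 else 0) - (if n - j \<in> T then 1 else 0)"
      if j: "j \<in> {1..m}" for j
    proof -
      have aj: "\<bar>int (D (j+1)) - int (D j)\<bar> \<le> 1" using a j mn by auto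
      have KE: "j \<in> K \<Longrightarrow> D (j+1) = D j" using K unfolding Eq_def by auto
      show ?thesis
        using memL[OF j] memR[OF j] aj KE j unfolding L_def R_def Inc_def Dec_def
        by (cases "D j < D (j+1)"; cases "D (j+1) < D j"; auto)
    qed
    consider "i \<le> m" | "n - m \<le> i" | "m < i" "i < n - m" by linarith
    then show ?thesis
    proof cases
      case 1 thus ?thesis using low i by auto
    next
      case 2
      define j where "j = n - i"
      have j: "j \<in> {1..m}" "i = n - j" using 2 i mn unfolding j_def by auto
      have jn: "j \<in> {1..n}" "Suc j \<in> {1..n}" using j mn by auto
      have "D j = D (n - j + 1)" using b jn(1) by blast
      moreover have "n - j + 1 = Suc i" using j mn by auto
      ultimately have e1: "D (Suc i) = D j" by simp
      have "D (Suc j) = D (n - Suc j + 1)" using b jn(2) by blast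
      moreover have "n - Suc j + 1 = i" using j mn by auto
      ultimately have e2: "D i = D (Suc j)" by simp
      have nj: "n - i = j" using j mn by auto
      have ij: "n - j = i" using j mn by auto
      have l: "int (D (Suc j)) - int (D j) = (if j \<in> T then 1 else 0) - (if i \<in> T then 1 else 0)"
        using low[OF j(1)] unfolding ij .
      show ?thesis unfolding nj e1 e2 using l by linarith
    next
      case 3
      hence ii: "n - i = i" "n - i + 1 = Suc i" using mn by auto
      have "i \<in> {1..n}" using i by auto
      hence "D i = D (n - i + 1)" using b by blast
      hence "D i = D (Suc i)" unfolding ii(2) .
      thus ?thesis unfolding ii(1) by simp
    qed
  qed
  have cardT: "card T = D 1"
  proof -
    have finLR: "finite L" "finite R" "finite Mid" using fin finK unfolding L_def R_def Mid_def by auto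
    have d1: "L \<inter> (\<lambda>i. n-i) ` R = {}"
    proof (rule ccontr)
      assume "L \<inter> (\<lambda>i. n-i) ` R \<noteq> {}"
      then obtain x where x: "x \<in> R" "n - x \<in> L" by auto
      hence "x \<le> m" "n - x \<le> m" using Lm by auto
      thus False using mn by auto
    qed
    have d2: "(L \<union> (\<lambda>i. n-i) ` R) \<inter> Mid = {}"
    proof (cases "r = 1")
      case True
      have "n div 2 \<notin> L" using Lm Mid_r[OF True] by auto
      moreover have "n div 2 \<notin> (\<lambda>i. n-i) ` R"
      proof
        assume "n div 2 \<in> (\<lambda>i. n-i) ` R"
        then obtain x where "x \<in> R" "n div 2 = n - x" by auto
        moreover have "x \<le> m" using \<open>x \<in> R\<close> Lm by auto
        ultimately show False using Mid_r[OF True] mn by auto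
      qed
      ultimately show ?thesis unfolding Mid_def by auto
    qed (simp add: Mid_def)
    have "card T = card (L \<union> (\<lambda>i. n-i) ` R) + card Mid"
      unfolding T_def using finLR d2 by (simp add: card_Un_disjoint)
    also have "card (L \<union> (\<lambda>i. n-i) ` R) = card L + card ((\<lambda>i. n-i) ` R)"
      using finLR d1 by (simp add: card_Un_disjoint)
    also have "card ((\<lambda>i. n-i) ` R) = card R"
    proof (rule card_image, rule inj_onI)
      fix x y assume "x \<in> R" "y \<in> R" "n - x = n - y"
      moreover have "x \<le> m" "y \<le> m" using \<open>x \<in> R\<close> \<open>y \<in> R\<close> Lm by auto
      ultimately show "x = y" using mn by auto
    qed
    also have "card L = card Inc + k"
      unfolding L_def using fin finK K dis1 by (subst card_Un_disjoint) (auto simp: Eq_def)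
    also have "card R = card Dec + k"
      unfolding R_def using fin finK K dis1 by (subst card_Un_disjoint) (auto simp: Eq_def)
    also have "card Mid = r" unfolding Mid_def r_def by auto
    finally show ?thesis using D1 sID by simp
  qed
  have deg: "toeplitz_degree n T i = D i" if "i \<in> {1..n}" for i
    using that
  proof (induction i)
    case 0 thus ?case by simp
  next
    case (Suc i)
    show ?case
    proof (cases "i = 0")
      case True thus ?thesis using deg_one[OF TT] cardT n2 by simp
    next
      case False
      hence i: "1 \<le> i" "i < n" using Suc.prems by auto
      hence IH: "toeplitz_degree n T i = D i" using Suc.IH by auto
      have "int (toeplitz_degree n T (Suc i)) = int (D (Suc i))"
        using deg_step[OF TT i] incr[OF i] IH by simp
      thus ?thesis by simp
    qed
  qed
  show ?thesis using TT deg by blast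
qed


definition conds :: "nat \<Rightarrow> (nat \<Rightarrow> nat) \<Rightarrow> bool" where
  "conds n D \<longleftrightarrow> (let m = (n - 1) div 2;
            s = card {i \<in> {1..m}. D (i + 1) \<noteq> D i}
        in (\<forall>i \<in> {1..n-1}. \<bar>int (D (i + 1)) - int (D i)\<bar> \<le> 1) \<and>
           (\<forall>i \<in> {1..n}. D i = D (n - i + 1)) \<and>
           s \<le> D 1 \<and> D 1 \<le> n - 1 - s \<and>
           (odd n \<longrightarrow> (even (D 1) \<longleftrightarrow> even s)))"

lemma conds_cong:
  assumes "\<forall>i\<in>{1..n}. D i = D' i" "n \<ge> 1"
  shows "conds n D = conds n D'"
proof -
  have s: "{i \<in> {1..(n - 1) div 2}. D (i + 1) \<noteq> D i} = {i \<in> {1..(n - 1) div 2}. D' (i + 1) \<noteq> D' i}"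
  proof -
    have H: "i \<in> {1..(n - 1) div 2} \<Longrightarrow> D (i+1) = D' (i+1) \<and> D i = D' i" for i
      using assms by auto
    show ?thesis using H by (intro Collect_cong) auto
  qed
  have a: "(\<forall>i \<in> {1..n-1}. \<bar>int (D (i + 1)) - int (D i)\<bar> \<le> 1) = (\<forall>i \<in> {1..n-1}. \<bar>int (D' (i + 1)) - int (D' i)\<bar> \<le> 1)"
  proof -
    have "i \<in> {1..n-1} \<Longrightarrow> D (i+1) = D' (i+1) \<and> D i = D' i" for i
      using assms by auto
    thus ?thesis by auto
  qed
  have b: "(\<forall>i \<in> {1..n}. D i = D (n - i + 1)) = (\<forall>i \<in> {1..n}. D' i = D' (n - i + 1))"
  proof -
    have "i \<in> {1..n} \<Longrightarrow> D (n-i+1) = D' (n-i+1) \<and> D i = D' i" for i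
      using assms by auto
    thus ?thesis by auto
  qed
  have one: "D 1 = D' 1" using assms by auto
  show ?thesis unfolding conds_def Let_def s a b one ..
qed

lemma conds_deg:
  assumes T: "T \<subseteq> {1..n-1}" and n: "n \<ge> 2"
  shows "conds n (toeplitz_degree n T)"
proof -
  let ?D = "toeplitz_degree n T"
  define m where "m = (n - 1) div 2"
  have mle: "m < n" unfolding m_def using n by auto
  have a: "\<forall>i \<in> {1..n-1}. \<bar>int (?D (i + 1)) - int (?D i)\<bar> \<le> 1"
  proof
    fix i assume "i \<in> {1..n-1}" hence i: "1 \<le> i" "i < n" by auto
    show "\<bar>int (?D (i + 1)) - int (?D i)\<bar> \<le> 1" using deg_step[OF T i] by auto
  qed
  have b: "\<forall>i \<in> {1..n}. ?D i = ?D (n - i + 1)" using deg_sym[OF T] by auto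
  have S: "{i \<in> {1..m}. ?D (i + 1) \<noteq> ?D i} = {i\<in>{1..m}. (i\<in>T) \<noteq> (n-i\<in>T)}"
  proof -
    have "i \<in> {1..m} \<Longrightarrow> (?D (i + 1) \<noteq> ?D i) = ((i\<in>T) \<noteq> (n-i\<in>T))" for i
    proof -
      assume "i \<in> {1..m}" hence i: "1 \<le> i" "i < n" using mle by auto
      show ?thesis using deg_step[OF T i] by (cases "i \<in> T"; cases "n - i \<in> T"; auto)
    qed
    thus ?thesis by blast
  qed
  have c: "card {i\<in>{1..m}. (i\<in>T) \<noteq> (n-i\<in>T)} \<le> card T \<and>
    card T + card {i\<in>{1..m}. (i\<in>T) \<noteq> (n-i\<in>T)} \<le> n - 1 \<and>
    (odd n \<longrightarrow> even (card T + card {i\<in>{1..m}. (i\<in>T) \<noteq> (n-i\<in>T)}))"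
    using count_T[OF T m_def] n by auto
  have one: "?D 1 = card T" using deg_one[OF T] n by auto
  define SS where "SS = {i\<in>{1..m}. (i\<in>T) \<noteq> (n-i\<in>T)}"
  have c1: "card SS \<le> card T" using c unfolding SS_def by blast
  have c2: "card T \<le> n - 1 - card SS" using c unfolding SS_def by linarith
  have c3: "odd n \<longrightarrow> (even (card T) \<longleftrightarrow> even (card SS))" using c unfolding SS_def by auto
  show ?thesis unfolding conds_def Let_def m_def[symmetric] S one SS_def[symmetric]
    using a b c1 c2 c3 by (intro conjI)
qed

lemma conds_construct:
  assumes n: "n \<ge> 2" and cd: "conds n D"
  shows "\<exists>T. T \<subseteq> {1..n-1} \<and> (\<forall>i\<in>{1..n}. toeplitz_degree n T i = D i)"
proof -
  define s where "s = card {i \<in> {1..(n - 1) div 2}. D (i + 1) \<noteq> D i}"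
  have H: "(\<forall>i \<in> {1..n-1}. \<bar>int (D (i + 1)) - int (D i)\<bar> \<le> 1) \<and>
           (\<forall>i \<in> {1..n}. D i = D (n - i + 1)) \<and>
           s \<le> D 1 \<and> D 1 \<le> n - 1 - s \<and>
           (odd n \<longrightarrow> (even (D 1) \<longleftrightarrow> even s))"
    using cd unfolding conds_def Let_def s_def .
  from H have a: "\<forall>i \<in> {1..n-1}. \<bar>int (D (i + 1)) - int (D i)\<bar> \<le> 1" by (elim conjE)
  from H have b: "\<forall>i \<in> {1..n}. D i = D (n - i + 1)" by (elim conjE)
  from H have c1: "s \<le> D 1" by (elim conjE)
  from H have c2: "D 1 \<le> n - 1 - s" by (elim conjE)
  from H have d: "odd n \<longrightarrow> (even (D 1) \<longleftrightarrow> even s)" by (elim conjE)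
  show ?thesis by (rule construct[OF n refl a b s_def c1 c2 d])
qed


lemma let_conds:
  "(let D = (\<lambda>i. d ! (\<pi> i - 1));
            m = (n - 1) div 2;
            s = card {i \<in> {1..m}. D (i + 1) \<noteq> D i}
        in (\<forall>i \<in> {1..n-1}. \<bar>int (D (i + 1)) - int (D i)\<bar> \<le> 1) \<and>
           (\<forall>i \<in> {1..n}. D i = D (n - i + 1)) \<and>
           s \<le> D 1 \<and> D 1 \<le> n - 1 - s \<and>
           (odd n \<longrightarrow> (even (D 1) \<longleftrightarrow> even s))) = conds n (\<lambda>i. d ! (\<pi> i - 1))"
  unfolding conds_def Let_def ..

lemma mset_perm_list:
  assumes p: "\<pi> permutes {1..n}" and len: "length d = n"
  shows "mset (map (\<lambda>i. d ! (\<pi> i - 1)) [1..<n+1]) = mset d"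
proof -
  have inj: "inj_on (\<lambda>i. \<pi> i - 1) {1..n}"
  proof (rule inj_onI)
    fix x y assume xy: "x \<in> {1..n}" "y \<in> {1..n}" "\<pi> x - 1 = \<pi> y - 1"
    have "\<pi> x \<in> {1..n}" "\<pi> y \<in> {1..n}" using permutes_in_image[OF p] xy by auto
    hence "\<pi> x = \<pi> y" using xy by auto
    thus "x = y" using permutes_inj[OF p] by (auto dest: injD)
  qed
  have st: "set [1..<n+1] = {1..n}" by auto
  have dist: "distinct (map (\<lambda>i. \<pi> i - 1) [1..<n+1])"
    unfolding distinct_map st using inj distinct_upt by blast
  have "set (map (\<lambda>i. \<pi> i - 1) [1..<n+1]) = (\<lambda>x. x - 1) ` (\<pi> ` {1..n})"
    by (auto simp: atLeastLessThanSuc_atLeastAtMost image_image)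
  also have "\<dots> = (\<lambda>x. x - 1) ` {1..n}" using permutes_image[OF p] by simp
  also have "\<dots> = {0..<n}"
  proof (rule set_eqI, rule iffI)
    fix x assume "x \<in> {0..<n}" thus "x \<in> (\<lambda>x. x - 1) ` {1..n}" by (intro image_eqI[of _ _ "x+1"]) auto
  qed auto
  finally have S: "set (map (\<lambda>i. \<pi> i - 1) [1..<n+1]) = set [0..<n]" unfolding set_upt .
  have "mset (map (\<lambda>i. \<pi> i - 1) [1..<n+1]) = mset [0..<n]"
    by (rule iffD1[OF set_eq_iff_mset_eq_distinct[OF dist distinct_upt] S])
  hence "mset (map (nth d) (map (\<lambda>i. \<pi> i - 1) [1..<n+1])) = mset (map (nth d) [0..<n])"
    by (metis mset_map)
  also have "map (nth d) [0..<n] = d" using map_nth[of d] len by simp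
  finally show ?thesis by (simp add: comp_def)
qed

lemma sort_eq:
  assumes "sorted_wrt (\<ge>) d" "mset xs = mset d"
  shows "rev (sort xs) = (d :: nat list)"
proof -
  have s1: "sorted (rev d)" using assms(1) by (simp add: sorted_wrt_rev)
  have s2: "mset (rev d) = mset xs" using assms(2) by simp
  have "sort xs = rev d" by (rule properties_for_sort[OF s2 s1])
  thus ?thesis by simp
qed

theorem theorem4p4:
  fixes n :: nat and d :: "nat list"
  assumes "n \<ge> 2" and "length d = n" and "sorted_wrt (\<ge>) d"
  shows "is_toeplitz_degree_sequence n d \<longleftrightarrow>
    (\<exists>\<pi>. \<pi> permutes {1..n} \<and>
       (let D = (\<lambda>i. d ! (\<pi> i - 1));
            m = (n - 1) div 2;
            s = card {i \<in> {1..m}. D (i + 1) \<noteq> D i}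
        in (\<forall>i \<in> {1..n-1}. \<bar>int (D (i + 1)) - int (D i)\<bar> \<le> 1) \<and>
           (\<forall>i \<in> {1..n}. D i = D (n - i + 1)) \<and>
           s \<le> D 1 \<and> D 1 \<le> n - 1 - s \<and>
           (odd n \<longrightarrow> (even (D 1) \<longleftrightarrow> even s))))"
  unfolding let_conds
proof
  assume "is_toeplitz_degree_sequence n d"
  then obtain T where T: "T \<subseteq> {1..n-1}" and dT: "d = toeplitz_degree_sequence n T"
    unfolding is_toeplitz_degree_sequence_def by blast
  define L where "L = map (toeplitz_degree n T) [1..<n+1]"
  have "mset d = mset L" unfolding dT toeplitz_degree_sequence_def L_def by simp
  hence "mset L = mset d" ..
  then obtain p where p: "p permutes {..<length d}" "permute_list p d = L"
    by (rule mset_eq_permutation)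
  have pn: "p permutes {..<n}" using p(1) assms(2) by simp
  have degp: "toeplitz_degree n T i = d ! p (i - 1)" if "i \<in> {1..n}" for i
  proof -
    have "i - 1 < length [1..<n+1]" using that by auto
    hence "L ! (i - 1) = toeplitz_degree n T ([1..<n+1] ! (i - 1))" unfolding L_def by (rule nth_map)
    also have "[1..<n+1] ! (i - 1) = i" using that by (simp del: upt_Suc add: nth_upt)
    finally have "L ! (i - 1) = toeplitz_degree n T i" .
    moreover have "permute_list p d ! (i - 1) = d ! p (i - 1)"
      using permute_list_nth[OF p(1)] that assms(2) by auto
    ultimately show ?thesis using p(2) by simp
  qed
  define \<pi> where "\<pi> = (\<lambda>i. if i \<in> {1..n} then Suc (p (i - 1)) else i)"
  have bij: "bij_betw \<pi> {1..n} {1..n}"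
  proof -
    have b1: "bij_betw (\<lambda>i. i - 1) {1..n} {..<n}"
      by (rule bij_betw_byWitness[of _ Suc]) (auto simp: image_def intro: bexI[of _ "Suc _"])
    have b2: "bij_betw p {..<n} {..<n}" using permutes_imp_bij[OF pn] .
    have b3: "bij_betw Suc {..<n} {1..n}"
      by (rule bij_betw_byWitness[of _ "\<lambda>i. i - 1"]) (auto simp: image_def intro: bexI[of _ "_ - 1"])
    have "bij_betw (Suc \<circ> p \<circ> (\<lambda>i. i - 1)) {1..n} {1..n}"
      using bij_betw_trans[OF bij_betw_trans[OF b1 b2] b3] by (simp add: comp_assoc)
    moreover have "\<forall>i\<in>{1..n}. (Suc \<circ> p \<circ> (\<lambda>i. i - 1)) i = \<pi> i" unfolding \<pi>_def by auto
    ultimately show ?thesis using bij_betw_cong by (metis (no_types, lifting))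
  qed
  have pi: "\<pi> permutes {1..n}" by (rule bij_imp_permutes[OF bij]) (auto simp: \<pi>_def)
  have eqD: "\<forall>i\<in>{1..n}. d ! (\<pi> i - 1) = toeplitz_degree n T i"
    using degp unfolding \<pi>_def by auto
  have "conds n (\<lambda>i. d ! (\<pi> i - 1))"
    using conds_cong[OF eqD] assms(1) conds_deg[OF T assms(1)] by simp
  thus "\<exists>\<pi>. \<pi> permutes {1..n} \<and> conds n (\<lambda>i. d ! (\<pi> i - 1))" using pi by blast
next
  assume "\<exists>\<pi>. \<pi> permutes {1..n} \<and> conds n (\<lambda>i. d ! (\<pi> i - 1))"
  then obtain \<pi> where pi: "\<pi> permutes {1..n}" and cd: "conds n (\<lambda>i. d ! (\<pi> i - 1))" by blast
  obtain T where T: "T \<subseteq> {1..n-1}" and deg: "\<forall>i\<in>{1..n}. toeplitz_degree n T i = d ! (\<pi> i - 1)"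
    using conds_construct[OF assms(1) cd] by blast
  have M: "map (toeplitz_degree n T) [1..<n+1] = map (\<lambda>i. d ! (\<pi> i - 1)) [1..<n+1]"
    using deg by (intro map_cong) auto
  have "mset (map (toeplitz_degree n T) [1..<n+1]) = mset d"
    unfolding M by (rule mset_perm_list[OF pi assms(2)])
  hence "d = toeplitz_degree_sequence n T"
    unfolding toeplitz_degree_sequence_def using sort_eq[OF assms(3)] by simp
  thus "is_toeplitz_degree_sequence n d" unfolding is_toeplitz_degree_sequence_def using T by blast
qed

end
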